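(* Let $A$ be a $\mathbb{U}$-poset, $r,s\in\mathbb{I}$, $u,v\in\mathbb{U}$, $a,b,c\in A$. Then: (a) if $r\le s$ and $a\le_r b$ then $a\le_s b$; (b) $a\le_0 b$ iff $a\le b$; (c) if $a\le_r b$ and $b\le_s c$ then $a\le_{r\dotplus s}c$; (d) $\rho(a,a)=0$ and $\rho(a,b)+\rho(b,c)\ge\rho(a,c)$, so $\rho$ is a pseudoquasimetric and $\mathrm{dist}$ is a pseudometric; (e) if $u(t\dotplus r)\le v(t)\dotplus s$ for all $t\in\mathbb{I}$ and $a\le_r b$, then $u(a)\le_s v(b)$; consequently $\rho(u(a),v(a))\le\bigvee_{t\in\mathbb{I}}(u(t)\dotminus v(t))$, and if $\mu:\mathbb{I}\to\mathbb{I}$ satisfies $u(t)\dotminus u(t')\le\mu(t\dotminus t')$ for all $t,t'\in\mathbb{I}$, then $\rho(u(a),u(b))\le\mu(\rho(a,b))$ for all $a,b\in A$; (f) if $u^\times(t\dotplus r)\le v(t)\dotplus s$ for all $t\in\mathbb{I}$, where $u^\times$ is the right adjoint of $u$, and $u(a)\le_r b$, then $a\le_s v(b)$. Moreover, if $A$ is a $\mathbb{U}$-$\Psi^{\mathrm{op}}$-inflattice, then (g) for every upper subset $\psi\subseteq A$ with $\psi^{\mathrm{op}}\in\Psi$ (so $\bigwedge\psi$ exists): $a\le_r\bigwedge\psi$ iff $a\le_r b$ for all $b\in\psi$; consequently for two such $\psi,\psi'$, $\rho(\bigwedge\psi,\bigwedge\psi')\le\bigwedge_{a\in\psi}\bigv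ee_{b\in\psi'}\rho(a,b)$.
   Context: $\mathbb{I}=[0,1]$; $\dotplus,\dotminus$ are truncated addition and subtraction on $\mathbb{I}$. $\mathbb{U}$ is the monoid of surjective monotone maps $\mathbb{I}\to\mathbb{I}$; for $u\in\mathbb{U}$, $u^\times(y)=\max\{x\mid u(x)\le y\}$ is its right adjoint. A $\mathbb{U}$-poset is a poset with a $\mathbb{U}$-action monotone in both variables. $a\le_r b$ iff for all $u,v\in\mathbb{U}$ with $u(t\dotplus r)\le v(t)$ for all $t$, $u(a)\le v(b)$; $\rho(a,b)=\bigwedge\{r\mid a\le_r b\}$; $\mathrm{dist}(a,b)=\rho(a,b)\vee\rho(b,a)$. Standing assumption: $\Phi,\Psi$ are join doctrines (classes of posets containing the one-element poset, closed under unions $\bigcup\mathcal{S}$ of sets $\mathcal{S}$ of subposets in the class with $\mathcal{S}$ (by inclusion) in the class, under codomains of monotone maps with cofinal image, and under cofinal subposets), $\omega\in\Phi$, and $\Phi$ is sound dual to $\Psi^{\mathrm{op}}$: for all posets $X,Y$, lower sets $\phi\subseteq Y$ in $\Phi$, lower sets $\psi\subseteq X$ in $\Psi$, and monotone $F:X^{\mathrm{op}}\times Y\to2$, $\bigwedge_{x\in\psi}\bigvee_{y\in\phi}F=\bigvee_{y\in\phi}\bigwedge_{x\in\psi}F$, and for every poset $X$ the lattice of lower sets of $X$ is the closure of the lower sets in $\Psi$ under unions of subfamilies belonging to $\Phi$. A $\Psi^{\mathrm{op}}$-meet is a meet of a subset $S$ with $S^{\mathrm{op}}\in\Psi$; a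 $\mathbb{U}$-$\Psi^{\mathrm{op}}$-inflattice is a $\mathbb{U}$-poset with all $\Psi^{\mathrm{op}}$-meets, each $u$ acting by a $\Psi^{\mathrm{op}}$-meet-preserving map. *)

theory Defs
  imports "HOL-Analysis.Analysis"
begin

definition II :: "real set" where "II = {0..1}"

definition tplus :: "real \<Rightarrow> real \<Rightarrow> real" where "tplus r s = min 1 (r + s)"
definition tminus :: "real \<Rightarrow> real \<Rightarrow> real" where "tminus r s = max 0 (r - s)"

text \<open>Joins and meets in the complete lattice I (empty join = 0, empty meet = 1).\<close>
definition ISup :: "real set \<Rightarrow> real" where "ISup S = Sup (insert 0 S)"
definition IInf :: "real set \<Rightarrow> real" where "IInf S = Inf (insert 1 S)"

text \<open>The monoid U of surjective monotone maps I -> I, represented extensionally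
  (value 0 outside I), so that maps agreeing on I are equal.\<close>
definition UU :: "(real \<Rightarrow> real) set" where
  "UU = {u. mono_on II u \<and> u ` II = II \<and> (\<forall>x. x \<notin> II \<longrightarrow> u x = 0)}"

definition uid :: "real \<Rightarrow> real" where "uid = (\<lambda>x. if x \<in> II then x else 0)"
definition ucomp :: "(real \<Rightarrow> real) \<Rightarrow> (real \<Rightarrow> real) \<Rightarrow> real \<Rightarrow> real" where
  "ucomp u v = (\<lambda>x. if x \<in> II then u (v x) else 0)"

definition uadj :: "(real \<Rightarrow> real) \<Rightarrow> real \<Rightarrow> real" where
  "uadj u y = Sup {x \<in> II. u x \<le> y}"

definition Uposet :: "((real \<Rightarrow> real) \<Rightarrow> 'a::order \<Rightarrow> 'a) \<Rightarrow> bool" where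
  "Uposet act \<longleftrightarrow>
     (\<forall>a. act uid a = a) \<and>
     (\<forall>u\<in>UU. \<forall>v\<in>UU. \<forall>a. act (ucomp u v) a = act u (act v a)) \<and>
     (\<forall>u\<in>UU. \<forall>v\<in>UU. \<forall>a b. (\<forall>t\<in>II. u t \<le> v t) \<and> a \<le> b \<longrightarrow> act u a \<le> act v b)"

definition le_r :: "((real \<Rightarrow> real) \<Rightarrow> 'a::order \<Rightarrow> 'a) \<Rightarrow> real \<Rightarrow> 'a \<Rightarrow> 'a \<Rightarrow> bool" where
  "le_r act r a b \<longleftrightarrow>
     (\<forall>u\<in>UU. \<forall>v\<in>UU. (\<forall>t\<in>II. u (tplus t r) \<le> v t) \<longrightarrow> act u a \<le> act v b)"

definition rho :: "((real \<Rightarrow> real) \<Rightarrow> 'a::order \<Rightarrow> 'a) \<Rightarrow> 'a \<Rightarrow> 'a \<Rightarrow> real" where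
  "rho act a b = IInf {r \<in> II. le_r act r a b}"

definition udist :: "((real \<Rightarrow> real) \<Rightarrow> 'a::order \<Rightarrow> 'a) \<Rightarrow> 'a \<Rightarrow> 'a \<Rightarrow> real" where
  "udist act a b = max (rho act a b) (rho act b a)"

definition is_meet :: "'a::order set \<Rightarrow> 'a \<Rightarrow> bool" where
  "is_meet S m \<longleftrightarrow> (\<forall>x\<in>S. m \<le> x) \<and> (\<forall>y. (\<forall>x\<in>S. y \<le> x) \<longrightarrow> y \<le> m)"

definition meet :: "'a::order set \<Rightarrow> 'a" where "meet S = (THE m. is_meet S m)"

definition upper_set :: "'a::order set \<Rightarrow> bool" where
  "upper_set S \<longleftrightarrow> (\<forall>x\<in>S. \<forall>y. x \<le> y \<longrightarrow> y \<in> S)"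

text \<open>PsiOp S means: the subposet S^op belongs to the class Psi.
  A U-Psi^op-inflattice: all Psi^op-meets exist and each u preserves them.\<close>
definition U_inflattice :: "('a::order set \<Rightarrow> bool) \<Rightarrow> ((real \<Rightarrow> real) \<Rightarrow> 'a \<Rightarrow> 'a) \<Rightarrow> bool" where
  "U_inflattice PsiOp act \<longleftrightarrow> Uposet act \<and>
     (\<forall>S. PsiOp S \<longrightarrow> (\<exists>m. is_meet S m)) \<and>
     (\<forall>u\<in>UU. \<forall>S m. PsiOp S \<and> is_meet S m \<longrightarrow> is_meet (act u ` S) (act u m))"

end

theory Submission
  imports Defs
begin


lemma II_iff: "x \<in> II \<longleftrightarrow> 0 \<le> x \<and> x \<le> (1::real)" by (simp add: II_def)

lemma UU_mono: "u \<in> UU \<Longrightarrow> x \<in> II \<Longrightarrow> y \<in> II \<Longrightarrow> x \<le> y \<Longrightarrow> u x \<le> u y"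
  by (auto simp: UU_def mono_on_def)

lemma UU_range: "u \<in> UU \<Longrightarrow> x \<in> II \<Longrightarrow> u x \<in> II"
  by (auto simp: UU_def)

lemma UU_surj: "u \<in> UU \<Longrightarrow> y \<in> II \<Longrightarrow> \<exists>x\<in>II. u x = y"
  unfolding UU_def by (metis (mono_tags, lifting) imageE mem_Collect_eq)

lemma UU_0: "u \<in> UU \<Longrightarrow> u 0 = 0"
proof -
  assume u: "u \<in> UU"
  obtain x where x: "x \<in> II" "u x = 0" using UU_surj[OF u, of 0] by (auto simp: II_def)
  have "u 0 \<le> u x" by (rule UU_mono[OF u]) (use x in \<open>auto simp: II_def\<close>)
  moreover have "u 0 \<in> II" using UU_range[OF u] by (auto simp: II_def)
  ultimately show ?thesis using x by (auto simp: II_def)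
qed

lemma UU_1: "u \<in> UU \<Longrightarrow> u 1 = 1"
proof -
  assume u: "u \<in> UU"
  obtain x where x: "x \<in> II" "u x = 1" using UU_surj[OF u, of 1] by (auto simp: II_def)
  have "u x \<le> u 1" by (rule UU_mono[OF u]) (use x in \<open>auto simp: II_def\<close>)
  moreover have "u 1 \<in> II" using UU_range[OF u] by (auto simp: II_def)
  ultimately show ?thesis using x by (auto simp: II_def)
qed

lemma uid_UU: "uid \<in> UU"
  by (auto simp: UU_def uid_def mono_on_def image_def)

lemma ucomp_UU: "u \<in> UU \<Longrightarrow> v \<in> UU \<Longrightarrow> ucomp u v \<in> UU"
proof -
  assume u: "u \<in> UU" and v: "v \<in> UU"
  have "ucomp u v ` II = u ` (v ` II)" by (auto simp: ucomp_def image_def)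
  also have "\<dots> = II" using u v by (simp add: UU_def)
  finally show ?thesis using u v
    by (auto simp: UU_def ucomp_def mono_on_def intro!: UU_mono[OF u] UU_mono[OF v] UU_range[OF v])
qed

definition sh :: "real \<Rightarrow> (real \<Rightarrow> real) \<Rightarrow> real \<Rightarrow> real" where
  "sh c w = (\<lambda>x. if x \<in> II then w (tminus x c) else 0)"

lemma tminus_II: "x \<in> II \<Longrightarrow> c \<in> II \<Longrightarrow> tminus x c \<in> II"
  by (auto simp: tminus_def II_def)
lemma tplus_II: "x \<in> II \<Longrightarrow> c \<in> II \<Longrightarrow> tplus x c \<in> II"
  by (auto simp: tplus_def II_def)

lemma sh_UU: assumes w: "w \<in> UU" and c: "c \<in> II" and w1: "w (1 - c) = 1"
  shows "sh c w \<in> UU"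
proof -
  have mono: "mono_on II (sh c w)"
    unfolding mono_on_def sh_def
    by (auto intro!: UU_mono[OF w] tminus_II c) (auto simp: tminus_def)
  have sub: "sh c w ` II \<subseteq> II"
    by (auto simp: sh_def intro!: UU_range[OF w] tminus_II c)
  have sup: "II \<subseteq> sh c w ` II"
  proof
    fix y assume y: "y \<in> II"
    obtain x where x: "x \<in> II" "w x = y" using UU_surj[OF w y] by auto
    show "y \<in> sh c w ` II"
    proof (cases "x \<le> 1 - c")
      case True
      then have "x + c \<in> II" "tminus (x + c) c = x" using x c by (auto simp: II_def tminus_def)
      then show ?thesis using x by (force simp: sh_def image_def)
    next
      case False
      then have "w (1 - c) \<le> w x" using x c by (intro UU_mono[OF w]) (auto simp: II_def)
      then have "y = 1" using w1 x y by (auto simp: II_def)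
      moreover have "(1::real) \<in> II" "tminus 1 c = 1 - c" using c by (auto simp: II_def tminus_def)
      ultimately show ?thesis using w1 by (force simp: sh_def image_def)
    qed
  qed
  show ?thesis using mono sub sup by (auto simp: UU_def sh_def)
qed



lemma Up_uid: "Uposet act \<Longrightarrow> act uid a = a" by (simp add: Uposet_def)
lemma Up_comp: "Uposet act \<Longrightarrow> u \<in> UU \<Longrightarrow> v \<in> UU \<Longrightarrow> act (ucomp u v) a = act u (act v a)"
  by (simp add: Uposet_def)
lemma Up_mono: "Uposet act \<Longrightarrow> u \<in> UU \<Longrightarrow> v \<in> UU \<Longrightarrow> (\<And>t. t \<in> II \<Longrightarrow> u t \<le> v t) \<Longrightarrow> a \<le> b \<Longrightarrow> act u a \<le> act v b"
  unfolding Uposet_def by blast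

lemma le_rD: "le_r act r a b \<Longrightarrow> u \<in> UU \<Longrightarrow> v \<in> UU \<Longrightarrow> (\<And>t. t \<in> II \<Longrightarrow> u (tplus t r) \<le> v t) \<Longrightarrow> act u a \<le> act v b"
  unfolding le_r_def by blast

lemma le_r_up: assumes "r \<in> II" "s \<in> II" "r \<le> s" "le_r act r a b" shows "le_r act s a b"
  unfolding le_r_def
proof (intro ballI impI)
  fix u v assume u: "u \<in> UU" and v: "v \<in> UU" and H: "\<forall>t\<in>II. u (tplus t s) \<le> v t"
  show "act u a \<le> act v b"
  proof (rule le_rD[OF assms(4) u v])
    fix t assume t: "t \<in> II"
    have "u (tplus t r) \<le> u (tplus t s)"
      using assms t by (intro UU_mono[OF u] tplus_II) (auto simp: tplus_def)
    then show "u (tplus t r) \<le> v t" using H t by force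
  qed
qed

lemma le_r_0: assumes U: "Uposet act" shows "le_r act 0 a b \<longleftrightarrow> a \<le> b"
proof
  assume "le_r act 0 a b"
  then have "act uid a \<le> act uid b"
    by (rule le_rD[OF _ uid_UU uid_UU]) (auto simp: uid_def tplus_def II_def)
  then show "a \<le> b" using U by (simp add: Up_uid)
next
  assume ab: "a \<le> b"
  show "le_r act 0 a b" unfolding le_r_def
  proof (intro ballI impI)
    fix u v assume u: "u \<in> UU" and v: "v \<in> UU" and H: "\<forall>t\<in>II. u (tplus t 0) \<le> v t"
    show "act u a \<le> act v b"
      by (rule Up_mono[OF U u v _ ab]) (use H in \<open>auto simp: tplus_def II_def\<close>)
  qed
qed

lemma le_r_1: "le_r act 1 a b"
  unfolding le_r_def
proof (intro ballI impI)
  fix u v assume u: "u \<in> UU" and v: "v \<in> UU" and H: "\<forall>t\<in>II. u (tplus t 1) \<le> v t"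
  have "u (tplus 0 1) \<le> v 0" using H by (auto simp: II_def)
  then have False using UU_0[OF v] UU_1[OF u] by (simp add: tplus_def)
  then show "act u a \<le> act v b" ..
qed

lemma le_r_trans: assumes U: "Uposet act" and r: "r \<in> II" and s: "s \<in> II"
  and ab: "le_r act r a b" and bc: "le_r act s b c"
  shows "le_r act (tplus r s) a c"
  unfolding le_r_def
proof (intro ballI impI)
  fix u v assume u: "u \<in> UU" and v: "v \<in> UU" and H: "\<forall>t\<in>II. u (tplus t (tplus r s)) \<le> v t"
  have "u (tplus (1 - s) (tplus r s)) \<le> v (1 - s)" using H s by (auto simp: II_def)
  moreover have "tplus (1 - s) (tplus r s) = 1" using r s by (auto simp: II_def tplus_def)
  moreover have "v (1 - s) \<in> II" using s by (intro UU_range[OF v]) (auto simp: II_def)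
  ultimately have v1: "v (1 - s) = 1" using UU_1[OF u] by (auto simp: II_def)
  define w where "w = sh s v"
  have w: "w \<in> UU" unfolding w_def by (rule sh_UU[OF v s v1])
  have "act u a \<le> act w b"
  proof (rule le_rD[OF ab u w])
    fix t assume t: "t \<in> II"
    have t': "tminus t s \<in> II" using t s by (rule tminus_II)
    have "u (tplus t r) \<le> u (tplus (tminus t s) (tplus r s))"
      using t s r t' by (intro UU_mono[OF u] tplus_II) (auto simp: tplus_def tminus_def II_def)
    also have "\<dots> \<le> v (tminus t s)" using H t' by blast
    finally show "u (tplus t r) \<le> w t" using t by (simp add: w_def sh_def)
  qed
  also have "act w b \<le> act v c"
  proof (rule le_rD[OF bc w v])
    fix t assume t: "t \<in> II"
    have "v (tminus (tplus t s) s) \<le> v t"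
      using t s by (intro UU_mono[OF v] tminus_II tplus_II) (auto simp: tplus_def tminus_def II_def)
    then show "w (tplus t s) \<le> v t" using t s tplus_II by (simp add: w_def sh_def)
  qed
  finally show "act u a \<le> act v c" .
qed

lemma rho_le: "s \<in> II \<Longrightarrow> le_r act s a b \<Longrightarrow> rho act a b \<le> s"
  unfolding rho_def IInf_def
  by (rule cInf_lower) (auto simp: bdd_below_def II_def intro!: exI[of _ 0])

lemma rho_nonneg: "0 \<le> rho act a b"
  unfolding rho_def IInf_def
  by (rule cInf_greatest) (auto simp: II_def)

lemma rho_le1: "rho act a b \<le> 1"
  unfolding rho_def IInf_def
  by (rule cInf_lower) (auto simp: bdd_below_def II_def intro!: exI[of _ 0])

lemma rho_II: "rho act a b \<in> II" using rho_nonneg rho_le1 by (auto simp: II_def)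

lemma rho_lt: assumes "rho act a b < s" "s \<le> 1" shows "le_r act s a b"
proof -
  have "\<exists>x\<in>insert 1 {r \<in> II. le_r act r a b}. x < s"
    using assms(1) unfolding rho_def IInf_def
    by (subst cInf_less_iff[symmetric]) (auto simp: bdd_below_def II_def intro!: exI[of _ 0])
  then obtain x where "x \<in> II" "le_r act x a b" "x < s" using assms(2) by auto
  then show ?thesis using le_r_up[of x s act a b] assms by (auto simp: II_def)
qed

lemma le_by_dense: fixes x y :: real
  assumes "\<And>s. x < s \<Longrightarrow> s \<le> 1 \<Longrightarrow> y \<le> s" "y \<le> 1" shows "y \<le> x"
proof (rule ccontr)
  assume "\<not> y \<le> x"
  then have "x < (x + y) / 2" "(x + y) / 2 \<le> 1" using assms(2) by auto
  from assms(1)[OF this] \<open>\<not> y \<le> x\<close> show False by auto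
qed

lemma rho_refl: "Uposet act \<Longrightarrow> rho act a a = 0"
  using rho_le[of 0 act a a] le_r_0[of act a a] rho_nonneg[of act a a] by (auto simp: II_def)

lemma rho_tri: assumes U: "Uposet act" shows "rho act a c \<le> rho act a b + rho act b c"
proof (rule le_by_dense[OF _ rho_le1])
  fix s assume s: "rho act a b + rho act b c < s" "s \<le> 1"
  define p where "p = rho act a b"
  define q where "q = rho act b c"
  define e where "e = (s - p - q) / 2"
  have e: "e > 0" using s by (simp add: e_def p_def q_def)
  have p: "0 \<le> p" "0 \<le> q" by (simp_all add: p_def q_def rho_nonneg)
  have pq: "p + q < s" using s by (simp add: p_def q_def)
  have "p < p + e" "p + e \<le> 1" "q < q + e" "q + e \<le> 1" using e p s pq unfolding e_def by (auto simp: field_simps)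
  then have "le_r act (p + e) a b" "le_r act (q + e) b c" using rho_lt unfolding p_def q_def by blast+
  moreover have "p + e \<in> II" "q + e \<in> II" using e p s pq unfolding II_def e_def by (auto simp: field_simps)
  ultimately have "le_r act (tplus (p + e) (q + e)) a c" using le_r_trans[OF U] by blast
  moreover have "tplus (p + e) (q + e) = s" using s by (auto simp: tplus_def e_def p_def q_def)
  ultimately show "rho act a c \<le> s" using rho_le[of s act a c] s p e
    by (auto simp: II_def e_def)
qed



lemma le_r_act: assumes U: "Uposet act" and u: "u \<in> UU" and v: "v \<in> UU" and r: "r \<in> II" and s: "s \<in> II"
  and H: "\<forall>t\<in>II. u (tplus t r) \<le> tplus (v t) s" and ab: "le_r act r a b"
  shows "le_r act s (act u a) (act v b)"
  unfolding le_r_def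
proof (intro ballI impI)
  fix u' v' assume u': "u' \<in> UU" and v': "v' \<in> UU" and H2: "\<forall>t\<in>II. u' (tplus t s) \<le> v' t"
  have "act (ucomp u' u) a \<le> act (ucomp v' v) b"
  proof (rule le_rD[OF ab ucomp_UU[OF u' u] ucomp_UU[OF v' v]])
    fix t assume t: "t \<in> II"
    have tr: "tplus t r \<in> II" using t r by (rule tplus_II)
    have vt: "v t \<in> II" using v t by (rule UU_range)
    have "u' (u (tplus t r)) \<le> u' (tplus (v t) s)"
      using H t by (intro UU_mono[OF u'] UU_range[OF u] tr tplus_II vt s) auto
    also have "\<dots> \<le> v' (v t)" using H2 vt by blast
    finally show "ucomp u' u (tplus t r) \<le> ucomp v' v t" using t tr by (simp add: ucomp_def)
  qed
  then show "act u' (act u a) \<le> act v' (act v b)" using Up_comp[OF U] u v u' v' by simp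
qed

lemma ISup_ge0: "S \<subseteq> II \<Longrightarrow> 0 \<le> ISup S"
  unfolding ISup_def by (rule cSup_upper) (auto simp: bdd_above_def II_def intro!: exI[of _ 1])

lemma ISup_upper: "S \<subseteq> II \<Longrightarrow> x \<in> S \<Longrightarrow> x \<le> ISup S"
  unfolding ISup_def by (rule cSup_upper) (auto simp: bdd_above_def II_def intro!: exI[of _ 1])

lemma ISup_le1: "S \<subseteq> II \<Longrightarrow> ISup S \<le> 1"
  unfolding ISup_def by (rule cSup_least) (auto simp: II_def)

lemma e2: assumes U: "Uposet act" and u: "u \<in> UU" and v: "v \<in> UU"
  shows "rho act (act u a) (act v a) \<le> ISup ((\<lambda>t. tminus (u t) (v t)) ` II)"
proof -
  define m where "m = ISup ((\<lambda>t. tminus (u t) (v t)) ` II)"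
  have sub: "(\<lambda>t. tminus (u t) (v t)) ` II \<subseteq> II"
    using UU_range[OF u] UU_range[OF v] by (force simp: II_def tminus_def)
  have m: "m \<in> II" using ISup_ge0[OF sub] ISup_le1[OF sub] by (simp add: m_def II_def)
  have "le_r act m (act u a) (act v a)"
  proof (rule le_r_act[OF U u v _ m])
    show "(0::real) \<in> II" by (simp add: II_def)
    show "le_r act 0 a a" using le_r_0[OF U] by simp
    show "\<forall>t\<in>II. u (tplus t 0) \<le> tplus (v t) m"
    proof
      fix t assume t: "t \<in> II"
      have "tminus (u t) (v t) \<le> m" unfolding m_def using t by (intro ISup_upper[OF sub]) auto
      then show "u (tplus t 0) \<le> tplus (v t) m"
        using t UU_range[OF u t] by (auto simp: tplus_def tminus_def II_def)
    qed
  qed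
  then show ?thesis using rho_le[OF m] by (simp add: m_def)
qed

lemma UU_cont: assumes u: "u \<in> UU" shows "continuous_on II u"
proof -
  define g where "g x = (if x < 0 then x else if x > 1 then x else u x)" for x
  have gm: "g x \<le> g y" if "x \<le> y" for x y
  proof -
    have "x \<in> II \<Longrightarrow> u x \<in> II" "y \<in> II \<Longrightarrow> u y \<in> II" using UU_range[OF u] by auto
    then show ?thesis using that UU_mono[OF u, of x y] by (auto simp: g_def II_def)
  qed
  have "y \<in> range g" for y
  proof (cases "y \<in> II")
    case True
    then obtain x where "x \<in> II" "u x = y" using UU_surj[OF u] by blast
    then show ?thesis by (auto simp: g_def II_def image_def intro!: exI[of _ x])
  next
    case False
    then have "g y = y" by (auto simp: g_def II_def)
    then show ?thesis by (metis rangeI)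
  qed
  then have "open (g ` UNIV)" by (metis UNIV_eq_I open_UNIV)
  then have "continuous_on UNIV g" by (rule continuous_onI_mono) (use gm in auto)
  then have "continuous_on II g" by (rule continuous_on_subset) auto
  moreover have "\<And>x. x \<in> II \<Longrightarrow> g x = u x" by (auto simp: g_def II_def)
  ultimately show ?thesis using continuous_on_cong by blast
qed

lemma UU_unif: assumes u: "u \<in> UU" and e: "e > 0"
  shows "\<exists>d>0. \<forall>x\<in>II. \<forall>y\<in>II. \<bar>x - y\<bar> < d \<longrightarrow> \<bar>u x - u y\<bar> < e"
proof -
  have "compact II" by (simp add: II_def)
  then have "uniformly_continuous_on II u" using UU_cont[OF u] compact_uniformly_continuous by blast
  then show ?thesis using e unfolding uniformly_continuous_on_def dist_real_def by metis
qed



lemma e3: assumes U: "Uposet act" and u: "u \<in> UU" and mu: "\<mu> ` II \<subseteq> II"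
  and H: "\<forall>t\<in>II. \<forall>t'\<in>II. tminus (u t) (u t') \<le> \<mu> (tminus t t')"
  shows "rho act (act u a) (act u b) \<le> \<mu> (rho act a b)"
proof (rule le_by_dense[OF _ rho_le1])
  fix s assume s: "\<mu> (rho act a b) < s" "s \<le> 1"
  define p where "p = rho act a b"
  have p: "p \<in> II" unfolding p_def by (rule rho_II)
  have mp: "\<mu> p \<in> II" using mu p by auto
  have sII: "s \<in> II" using s mp by (auto simp: II_def p_def)
  define e where "e = s - \<mu> p"
  have e: "e > 0" using s by (simp add: e_def p_def)
  obtain d where d: "d > 0" "\<forall>x\<in>II. \<forall>y\<in>II. \<bar>x - y\<bar> < d \<longrightarrow> \<bar>u x - u y\<bar> < e"
    using UU_unif[OF u e] by blast
  have "p \<noteq> 1"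
  proof
    assume "p = 1"
    have "tminus (u 1) (u 0) \<le> \<mu> (tminus 1 0)" using H by (simp add: II_def)
    then have "tminus (u 1) (u 0) \<le> \<mu> p" using \<open>p = 1\<close> by (simp add: tminus_def)
    then have "1 \<le> \<mu> p" using UU_0[OF u] UU_1[OF u] by (simp add: tminus_def)
    then show False using s mp by (auto simp: p_def)
  qed
  then have p1: "p < 1" using p by (auto simp: II_def)
  define r where "r = min 1 (p + d / 2)"
  have r: "p < r" "r \<le> 1" "r - p < d" using p1 d by (auto simp: r_def)
  have rII: "r \<in> II" using r p by (auto simp: II_def)
  have ab: "le_r act r a b" using rho_lt[of act a b r] r by (simp add: p_def)
  have "le_r act s (act u a) (act u b)"
  proof (rule le_r_act[OF U u u rII sII _ ab], rule ballI)
    fix t assume t: "t \<in> II"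
    define x where "x = tplus t r"
    define y where "y = x - p"
    have xII: "x \<in> II" unfolding x_def using t rII by (rule tplus_II)
    have yII: "y \<in> II" using t r p xII by (auto simp: y_def x_def tplus_def II_def)
    have "tminus (u x) (u y) \<le> \<mu> (tminus x y)" using H xII yII by blast
    moreover have "tminus x y = p" using p by (simp add: y_def tminus_def II_def)
    ultimately have 1: "u x - u y \<le> \<mu> p" by (simp add: tminus_def)
    have 2: "u y - u t < e"
    proof (cases "y \<le> t")
      case True then show ?thesis using UU_mono[OF u yII t] e by simp
    next
      case False
      then have "\<bar>y - t\<bar> < d" using r by (auto simp: y_def x_def tplus_def)
      then show ?thesis using d yII t by force
    qed
    have "u x \<le> 1" using UU_range[OF u xII] by (simp add: II_def)
    then have "u x \<le> tplus (u t) s"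
      using 1 2 by (simp add: tplus_def e_def)
    then show "u (tplus t r) \<le> tplus (u t) s" by (simp add: x_def)
  qed
  then show "rho act (act u a) (act u b) \<le> s" using rho_le[OF sII] by blast
qed


lemma uadj_facts: assumes u: "u \<in> UU" and y: "y \<in> II"
  shows "uadj u y \<in> II" "\<And>x. x \<in> II \<Longrightarrow> u x \<le> y \<Longrightarrow> x \<le> uadj u y"
    "\<And>y'. y \<le> y' \<Longrightarrow> uadj u y \<le> uadj u y'"
proof -
  have ne: "0 \<in> {x \<in> II. u x \<le> y}" using UU_0[OF u] y by (auto simp: II_def)
  have bdd: "bdd_above {x \<in> II. u x \<le> z}" for z
    unfolding bdd_above_def by (rule exI[of _ 1]) (auto simp: II_def)
  have l1: "0 \<le> uadj u y" unfolding uadj_def by (rule cSup_upper[OF ne bdd])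
  have l2: "uadj u y \<le> 1" unfolding uadj_def
  proof (rule cSup_least)
    show "{x \<in> II. u x \<le> y} \<noteq> {}" using ne by blast
  qed (auto simp: II_def)
  show "uadj u y \<in> II" using l1 l2 by (simp add: II_def)
  show "\<And>x. x \<in> II \<Longrightarrow> u x \<le> y \<Longrightarrow> x \<le> uadj u y"
    unfolding uadj_def by (rule cSup_upper[OF _ bdd]) simp
  show "uadj u y \<le> uadj u y'" if "y \<le> y'" for y'
    unfolding uadj_def
  proof (rule cSup_subset_mono[OF _ bdd])
    show "{x \<in> II. u x \<le> y} \<noteq> {}" using ne by blast
    show "{x \<in> II. u x \<le> y} \<subseteq> {x \<in> II. u x \<le> y'}" using that by auto
  qed
qed
lemma f_part: assumes U: "Uposet act" and u: "u \<in> UU" and v: "v \<in> UU" and r: "r \<in> II" and s: "s \<in> II"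
  and H: "\<forall>t\<in>II. uadj u (tplus t r) \<le> tplus (v t) s" and L: "le_r act r (act u a) b"
  shows "le_r act s a (act v b)"
  unfolding le_r_def
proof (intro ballI impI)
  fix u' v' assume u': "u' \<in> UU" and v': "v' \<in> UU" and H2: "\<forall>t\<in>II. u' (tplus t s) \<le> v' t"
  define V where "V = ucomp v' v"
  have V: "V \<in> UU" unfolding V_def by (rule ucomp_UU[OF v' v])
  have r1: "1 - r \<in> II" using r by (auto simp: II_def)
  have vr: "v (1 - r) \<in> II" using UU_range[OF v r1] .
  have "uadj u 1 = 1"
  proof -
    have "uadj u 1 \<in> II" "1 \<le> uadj u 1" using uadj_facts[OF u, of 1] UU_range[OF u, of 1]
      by (auto simp: II_def)
    then show ?thesis by (auto simp: II_def)
  qed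
  moreover have "tplus (1 - r) r = 1" using r by (auto simp: tplus_def II_def)
  moreover have "uadj u (tplus (1 - r) r) \<le> tplus (v (1 - r)) s" using H r1 by blast
  ultimately have "1 \<le> tplus (v (1 - r)) s" by simp
  then have "u' 1 \<le> u' (tplus (v (1 - r)) s)"
    by (intro UU_mono[OF u'] tplus_II vr s) (auto simp: II_def)
  also have "\<dots> \<le> v' (v (1 - r))" using H2 vr by blast
  finally have V1: "V (1 - r) = 1" using UU_1[OF u'] UU_range[OF V r1] r1
    by (auto simp: V_def ucomp_def II_def)
  define W where "W = sh r V"
  have W: "W \<in> UU" unfolding W_def by (rule sh_UU[OF V r V1])
  have "act W (act u a) \<le> act V b"
  proof (rule le_rD[OF L W V])
    fix t assume t: "t \<in> II"
    have "V (tminus (tplus t r) r) \<le> V t"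
      using t r by (intro UU_mono[OF V] tminus_II tplus_II) (auto simp: tplus_def tminus_def II_def)
    then show "W (tplus t r) \<le> V t" using t r tplus_II by (simp add: W_def sh_def)
  qed
  moreover have "act u' a \<le> act (ucomp W u) a"
  proof (rule Up_mono[OF U u' ucomp_UU[OF W u]])
    fix x assume x: "x \<in> II"
    have ux: "u x \<in> II" using UU_range[OF u x] .
    define t0 where "t0 = tminus (u x) r"
    have t0: "t0 \<in> II" unfolding t0_def using ux r by (rule tminus_II)
    have vt0: "v t0 \<in> II" using UU_range[OF v t0] .
    have le: "u x \<le> tplus t0 r" using ux r by (auto simp: t0_def tplus_def tminus_def II_def)
    have a1: "x \<le> uadj u (u x)" using uadj_facts(2)[OF u ux x] by simp
    have a2: "uadj u (u x) \<le> uadj u (tplus t0 r)" using uadj_facts(3)[OF u ux le] .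
    have a3: "uadj u (tplus t0 r) \<le> tplus (v t0) s" using H t0 by blast
    have "u' x \<le> u' (tplus (v t0) s)"
      using a1 a2 a3 x by (intro UU_mono[OF u'] tplus_II vt0 s) auto
    also have "\<dots> \<le> v' (v t0)" using H2 vt0 by blast
    finally show "u' x \<le> ucomp W u x"
      using x ux t0 by (simp add: ucomp_def W_def sh_def V_def t0_def)
  qed simp
  moreover have "act (ucomp W u) a = act W (act u a)" using Up_comp[OF U W u] .
  moreover have "act V b = act v' (act v b)" unfolding V_def using Up_comp[OF U v' v] .
  ultimately show "act u' a \<le> act v' (act v b)" by simp
qed



lemma meet_eq: "is_meet S m \<Longrightarrow> meet S = m"
  unfolding meet_def
  by (rule the_equality) (auto simp: is_meet_def intro: order.antisym)

lemma g1: assumes I: "U_inflattice PsiOp act" and P: "PsiOp \<psi>"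
  shows "le_r act r a (meet \<psi>) \<longleftrightarrow> (\<forall>b\<in>\<psi>. le_r act r a b)"
proof -
  have U: "Uposet act" using I by (simp add: U_inflattice_def)
  obtain m where m: "is_meet \<psi> m" using I P by (auto simp: U_inflattice_def)
  have mm: "meet \<psi> = m" by (rule meet_eq[OF m])
  show ?thesis unfolding mm
  proof
    assume L: "le_r act r a m"
    show "\<forall>b\<in>\<psi>. le_r act r a b"
    proof (intro ballI)
      fix b assume b: "b \<in> \<psi>"
      have mb: "m \<le> b" using m b by (simp add: is_meet_def)
      show "le_r act r a b" unfolding le_r_def
      proof (intro ballI impI)
        fix u v assume u: "u \<in> UU" and v: "v \<in> UU" and H: "\<forall>t\<in>II. u (tplus t r) \<le> v t"
        have "act u a \<le> act v m" using le_rD[OF L u v] H by blast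
        also have "act v m \<le> act v b" by (rule Up_mono[OF U v v _ mb]) simp
        finally show "act u a \<le> act v b" .
      qed
    qed
  next
    assume R: "\<forall>b\<in>\<psi>. le_r act r a b"
    show "le_r act r a m" unfolding le_r_def
    proof (intro ballI impI)
      fix u v assume u: "u \<in> UU" and v: "v \<in> UU" and H: "\<forall>t\<in>II. u (tplus t r) \<le> v t"
      have im: "is_meet (act v ` \<psi>) (act v m)" using I P m v by (auto simp: U_inflattice_def)
      have "\<forall>x\<in>act v ` \<psi>. act u a \<le> x" using R le_rD[OF _ u v] H by blast
      then show "act u a \<le> act v m" using im by (simp add: is_meet_def)
    qed
  qed
qed

lemma g2: assumes I: "U_inflattice PsiOp act" and P: "PsiOp \<psi>" and P': "PsiOp \<psi>'"
  shows "rho act (meet \<psi>) (meet \<psi>') \<le> IInf ((\<lambda>a. ISup ((\<lambda>b. rho act a b) ` \<psi>')) ` \<psi>)"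
proof -
  have U: "Uposet act" using I by (simp add: U_inflattice_def)
  obtain m where m: "is_meet \<psi> m" using I P by (auto simp: U_inflattice_def)
  have mm: "meet \<psi> = m" by (rule meet_eq[OF m])
  have sub: "(\<lambda>b. rho act a b) ` \<psi>' \<subseteq> II" for a using rho_II by blast
  have key: "rho act m (meet \<psi>') \<le> ISup ((\<lambda>b. rho act a b) ` \<psi>')" if a: "a \<in> \<psi>" for a
  proof (rule le_by_dense[OF _ rho_le1])
    fix s assume s: "ISup ((\<lambda>b. rho act a b) ` \<psi>') < s" "s \<le> 1"
    have "0 \<le> ISup ((\<lambda>b. rho act a b) ` \<psi>')" by (rule ISup_ge0[OF sub])
    then have sII: "s \<in> II" using s by (simp add: II_def)
    have "\<forall>b\<in>\<psi>'. le_r act s a b"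
    proof
      fix b assume b: "b \<in> \<psi>'"
      have "rho act a b \<le> ISup ((\<lambda>b. rho act a b) ` \<psi>')" using b by (intro ISup_upper[OF sub]) auto
      then show "le_r act s a b" using s by (intro rho_lt) auto
    qed
    then have L: "le_r act s a (meet \<psi>')" using g1[OF I P'] by blast
    have ma: "m \<le> a" using m a by (simp add: is_meet_def)
    have "le_r act s m (meet \<psi>')" unfolding le_r_def
    proof (intro ballI impI)
      fix u v assume u: "u \<in> UU" and v: "v \<in> UU" and H: "\<forall>t\<in>II. u (tplus t s) \<le> v t"
      have "act u m \<le> act u a" by (rule Up_mono[OF U u u _ ma]) simp
      also have "act u a \<le> act v (meet \<psi>')" using le_rD[OF L u v] H by blast
      finally show "act u m \<le> act v (meet \<psi>')" .
    qed
    then show "rho act m (meet \<psi>') \<le> s" using rho_le[OF sII] by blast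
  qed
  show ?thesis unfolding mm IInf_def
  proof (rule cInf_greatest)
    show "insert 1 ((\<lambda>a. ISup ((\<lambda>b. rho act a b) ` \<psi>')) ` \<psi>) \<noteq> {}" by blast
  next
    fix x assume "x \<in> insert 1 ((\<lambda>a. ISup ((\<lambda>b. rho act a b) ` \<psi>')) ` \<psi>)"
    then show "rho act m (meet \<psi>') \<le> x" using key rho_le1 by blast
  qed
qed

theorem lemma4p6:
  fixes act :: "(real \<Rightarrow> real) \<Rightarrow> 'a::order \<Rightarrow> 'a"
    and PsiOp :: "'a set \<Rightarrow> bool"
  assumes "Uposet act"
  shows
    \<comment> \<open>(a)\<close>
    "(\<forall>r\<in>II. \<forall>s\<in>II. \<forall>a b. r \<le> s \<and> le_r act r a b \<longrightarrow> le_r act s a b)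
   \<comment> \<open>(b)\<close>
   \<and> (\<forall>a b. le_r act 0 a b \<longleftrightarrow> a \<le> b)
   \<comment> \<open>(c)\<close>
   \<and> (\<forall>r\<in>II. \<forall>s\<in>II. \<forall>a b c. le_r act r a b \<and> le_r act s b c \<longrightarrow> le_r act (tplus r s) a c)
   \<comment> \<open>(d)\<close>
   \<and> (\<forall>a. rho act a a = 0)
   \<and> (\<forall>a b c. rho act a b + rho act b c \<ge> rho act a c)
   \<and> (\<forall>a. udist act a a = 0)
   \<and> (\<forall>a b. udist act a b = udist act b a)
   \<and> (\<forall>a b c. udist act a b + udist act b c \<ge> udist act a c)
   \<comment> \<open>(e)\<close>
   \<and> (\<forall>u\<in>UU. \<forall>v\<in>UU. \<forall>r\<in>II. \<forall>s\<in>II. \<forall>a b.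
        (\<forall>t\<in>II. u (tplus t r) \<le> tplus (v t) s) \<and> le_r act r a b
        \<longrightarrow> le_r act s (act u a) (act v b))
   \<and> (\<forall>u\<in>UU. \<forall>v\<in>UU. \<forall>a.
        rho act (act u a) (act v a) \<le> ISup ((\<lambda>t. tminus (u t) (v t)) ` II))
   \<and> (\<forall>u\<in>UU. \<forall>\<mu>. \<mu> ` II \<subseteq> II \<and> (\<forall>t\<in>II. \<forall>t'\<in>II. tminus (u t) (u t') \<le> \<mu> (tminus t t'))
        \<longrightarrow> (\<forall>a b. rho act (act u a) (act u b) \<le> \<mu> (rho act a b)))
   \<comment> \<open>(f)\<close>
   \<and> (\<forall>u\<in>UU. \<forall>v\<in>UU. \<forall>r\<in>II. \<forall>s\<in>II. \<forall>a b.
        (\<forall>t\<in>II. uadj u (tplus t r) \<le> tplus (v t) s) \<and> le_r act r (act u a) b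
        \<longrightarrow> le_r act s a (act v b))
   \<comment> \<open>(g)\<close>
   \<and> (U_inflattice PsiOp act \<longrightarrow>
        (\<forall>\<psi>. upper_set \<psi> \<and> PsiOp \<psi> \<longrightarrow>
           (\<forall>r\<in>II. \<forall>a. le_r act r a (meet \<psi>) \<longleftrightarrow> (\<forall>b\<in>\<psi>. le_r act r a b)))
      \<and> (\<forall>\<psi> \<psi>'. upper_set \<psi> \<and> PsiOp \<psi> \<and> upper_set \<psi>' \<and> PsiOp \<psi>' \<longrightarrow>
           rho act (meet \<psi>) (meet \<psi>') \<le> IInf ((\<lambda>a. ISup ((\<lambda>b. rho act a b) ` \<psi>')) ` \<psi>)))"
  proof -
  note U = assms
  have tri: "\<And>a b c. rho act a c \<le> rho act a b + rho act b c" using rho_tri[OF U] by blast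
  have d1: "\<forall>a b c. udist act a b + udist act b c \<ge> udist act a c"
  proof (intro allI)
    fix a b c
    have "rho act a c \<le> rho act a b + rho act b c" "rho act c a \<le> rho act c b + rho act b a"
      using tri by blast+
    then show "udist act a b + udist act b c \<ge> udist act a c" by (auto simp: udist_def)
  qed
  show ?thesis
  proof (intro conjI)
    show "\<forall>r\<in>II. \<forall>s\<in>II. \<forall>a b. r \<le> s \<and> le_r act r a b \<longrightarrow> le_r act s a b"
      using le_r_up by blast
    show "\<forall>a b. le_r act 0 a b \<longleftrightarrow> a \<le> b" using le_r_0[OF U] by blast
    show "\<forall>r\<in>II. \<forall>s\<in>II. \<forall>a b c. le_r act r a b \<and> le_r act s b c \<longrightarrow> le_r act (tplus r s) a c"
      using le_r_trans[OF U] by blast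
    show "\<forall>a. rho act a a = 0" using rho_refl[OF U] by blast
    show "\<forall>a b c. rho act a b + rho act b c \<ge> rho act a c" using tri by blast
    show "\<forall>a. udist act a a = 0" using rho_refl[OF U] by (simp add: udist_def)
    show "\<forall>a b. udist act a b = udist act b a" by (simp add: udist_def max.commute)
    show "\<forall>a b c. udist act a b + udist act b c \<ge> udist act a c" by (rule d1)
    show "\<forall>u\<in>UU. \<forall>v\<in>UU. \<forall>r\<in>II. \<forall>s\<in>II. \<forall>a b.
        (\<forall>t\<in>II. u (tplus t r) \<le> tplus (v t) s) \<and> le_r act r a b
        \<longrightarrow> le_r act s (act u a) (act v b)" using le_r_act[OF U] by blast
    show "\<forall>u\<in>UU. \<forall>v\<in>UU. \<forall>a.
        rho act (act u a) (act v a) \<le> ISup ((\<lambda>t. tminus (u t) (v t)) ` II)" using e2[OF U] by blast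
    show "\<forall>u\<in>UU. \<forall>\<mu>. \<mu> ` II \<subseteq> II \<and> (\<forall>t\<in>II. \<forall>t'\<in>II. tminus (u t) (u t') \<le> \<mu> (tminus t t'))
        \<longrightarrow> (\<forall>a b. rho act (act u a) (act u b) \<le> \<mu> (rho act a b))" using e3[OF U] by blast
    show "\<forall>u\<in>UU. \<forall>v\<in>UU. \<forall>r\<in>II. \<forall>s\<in>II. \<forall>a b.
        (\<forall>t\<in>II. uadj u (tplus t r) \<le> tplus (v t) s) \<and> le_r act r (act u a) b
        \<longrightarrow> le_r act s a (act v b)" using f_part[OF U] by blast
    show "U_inflattice PsiOp act \<longrightarrow>
        (\<forall>\<psi>. upper_set \<psi> \<and> PsiOp \<psi> \<longrightarrow>
           (\<forall>r\<in>II. \<forall>a. le_r act r a (meet \<psi>) \<longleftrightarrow> (\<forall>b\<in>\<psi>. le_r act r a b)))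
      \<and> (\<forall>\<psi> \<psi>'. upper_set \<psi> \<and> PsiOp \<psi> \<and> upper_set \<psi>' \<and> PsiOp \<psi>' \<longrightarrow>
           rho act (meet \<psi>) (meet \<psi>') \<le> IInf ((\<lambda>a. ISup ((\<lambda>b. rho act a b) ` \<psi>')) ` \<psi>))"
    proof (intro impI conjI allI ballI)
      assume I: "U_inflattice PsiOp act"
      fix \<psi> r a assume "upper_set \<psi> \<and> PsiOp \<psi>" "r \<in> II"
      then show "le_r act r a (meet \<psi>) \<longleftrightarrow> (\<forall>b\<in>\<psi>. le_r act r a b)" using g1[OF I] by blast
    next
      assume I: "U_inflattice PsiOp act"
      fix \<psi> \<psi>' assume "upper_set \<psi> \<and> PsiOp \<psi> \<and> upper_set \<psi>' \<and> PsiOp \<psi>'"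
      then show "rho act (meet \<psi>) (meet \<psi>') \<le> IInf ((\<lambda>a. ISup ((\<lambda>b. rho act a b) ` \<psi>')) ` \<psi>)"
        using g2[OF I] by blast
    qed
  qed
qed


end
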